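(* Let $X$ be a compact Hausdorff space and $T\colon X\to X$ a continuous positively expansive map. Let $\hat Z=(\hat r,\hat s\colon\hat Y\to\hat X)$ be a topological graph with $\hat Y,\hat X$ compact Hausdorff, and let $\pi_{\hat Y}\colon\hat Y\to X$, $\pi_{\hat X}\colon\hat X\to X$ be continuous surjections with $T\circ\pi_{\hat Y}=\pi_{\hat X}\circ\hat r$ and $\pi_{\hat Y}=\pi_{\hat X}\circ\hat s$. If $\pi_{\hat Y}$ is locally injective, then the shift $\sigma\colon\hat Z^{-\infty}\to\hat Z^{-\infty}$ is positively expansive.
   Context: A topological graph $(\hat r,\hat s\colon\hat Y\to\hat X)$ consists of continuous maps (range, source). Its left infinite path space is $\hat Z^{-\infty}=\{(\dots,y_{-2},y_{-1})\in\prod_{i<0}\hat Y:\hat s(y_i)=\hat r(y_{i+1})\ \forall i<-1\}$ with the relative product topology, and the shift is $\sigma(\dots,y_{-3},y_{-2},y_{-1})=(\dots,y_{-3},y_{-2})$. A continuous map $S\colon W\to W$ on a compact Hausdorff space is positively expansive if there is a finite open cover $\{U_i\}_{i=1}^m$ of $W$ such that whenever $w,w'\in W$ satisfy: for every $n\ge0$ there is $i_n$ with $S^n(w),S^n(w')\in U_{i_n}$, then $w=w'$ (for metrizable $W$ this is equivalent to the usual metric definition). *)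

theory Defs
  imports "HOL-Analysis.Analysis"
begin

definition positively_expansive :: "'a topology \<Rightarrow> ('a \<Rightarrow> 'a) \<Rightarrow> bool" where
  "positively_expansive W S \<longleftrightarrow>
     continuous_map W W S \<and>
     (\<exists>\<U>. finite \<U> \<and> (\<forall>U\<in>\<U>. openin W U) \<and> \<Union>\<U> = topspace W \<and>
        (\<forall>w\<in>topspace W. \<forall>w'\<in>topspace W.
           (\<forall>n. \<exists>U\<in>\<U>. (S ^^ n) w \<in> U \<and> (S ^^ n) w' \<in> U) \<longrightarrow> w = w'))"

definition locally_injective :: "'a topology \<Rightarrow> ('a \<Rightarrow> 'b) \<Rightarrow> bool" where
  "locally_injective Y f \<longleftrightarrow>
     (\<forall>y\<in>topspace Y. \<exists>U. openin Y U \<and> y \<in> U \<and> inj_on f U)"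

text \<open>A path (..., y_{-2}, y_{-1}) is encoded as p :: nat => 'y with p n = y_{-(n+1)};
  the condition s(y_i) = r(y_{i+1}) for i < -1 becomes s (p (Suc n)) = r (p n).\<close>
definition left_paths :: "'y topology \<Rightarrow> ('y \<Rightarrow> 'x) \<Rightarrow> ('y \<Rightarrow> 'x) \<Rightarrow> (nat \<Rightarrow> 'y) set" where
  "left_paths Y r s = {p \<in> topspace (product_topology (\<lambda>_. Y) UNIV). \<forall>n. s (p (Suc n)) = r (p n)}"

definition left_path_space :: "'y topology \<Rightarrow> ('y \<Rightarrow> 'x) \<Rightarrow> ('y \<Rightarrow> 'x) \<Rightarrow> (nat \<Rightarrow> 'y) topology" where
  "left_path_space Y r s = subtopology (product_topology (\<lambda>_. Y) UNIV) (left_paths Y r s)"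

text \<open>The shift deletes y_{-1}: in the encoding, (shift p) n = p (Suc n).\<close>
definition path_shift :: "(nat \<Rightarrow> 'y) \<Rightarrow> (nat \<Rightarrow> 'y)" where
  "path_shift p = (\<lambda>n. p (Suc n))"

end

theory Submission
  imports Defs
begin

lemma shift_pow: "(path_shift ^^ n) p = (\<lambda>k. p (k + n))"
  by (induction n arbitrary: p) (auto simp: path_shift_def)

lemma lp_top: "p \<in> left_paths Y r s \<Longrightarrow> p n \<in> topspace Y"
  by (auto simp: left_paths_def topspace_product_topology)

theorem proposition4p16:
  fixes X :: "'a topology" and T :: "'a \<Rightarrow> 'a"
    and Yh :: "'y topology" and Xh :: "'x topology"
    and r s :: "'y \<Rightarrow> 'x" and piY :: "'y \<Rightarrow> 'a" and piX :: "'x \<Rightarrow> 'a"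
  assumes "compact_space X" and "Hausdorff_space X"
    and "positively_expansive X T"
    and "compact_space Yh" and "Hausdorff_space Yh"
    and "compact_space Xh" and "Hausdorff_space Xh"
    and "continuous_map Yh Xh r" and "continuous_map Yh Xh s"
    and "continuous_map Yh X piY" and "piY ` topspace Yh = topspace X"
    and "continuous_map Xh X piX" and "piX ` topspace Xh = topspace X"
    and "\<forall>y\<in>topspace Yh. T (piY y) = piX (r y)"
    and "\<forall>y\<in>topspace Yh. piY y = piX (s y)"
    and "locally_injective Yh piY"
  shows "positively_expansive (left_path_space Yh r s) path_shift"
proof -
  let ?P = "product_topology (\<lambda>_. Yh) (UNIV::nat set)"
  let ?L = "left_paths Yh r s"
  have tsL: "topspace (left_path_space Yh r s) = ?L"
    unfolding left_path_space_def left_paths_def by auto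
  define P where "P = (\<lambda>\<U>. finite \<U> \<and> (\<forall>U\<in>\<U>. openin X U) \<and> \<Union>\<U> = topspace X \<and>
        (\<forall>w\<in>topspace X. \<forall>w'\<in>topspace X.
           (\<forall>n. \<exists>U\<in>\<U>. (T ^^ n) w \<in> U \<and> (T ^^ n) w' \<in> U) \<longrightarrow> w = w'))"
  have "\<exists>\<U>. P \<U>" using assms(3) unfolding positively_expansive_def P_def by (rule conjunct2)
  then obtain \<U> where PU: "P \<U>" by (rule exE)
  have U: "finite \<U>" "\<forall>U\<in>\<U>. openin X U" "\<Union>\<U> = topspace X"
    using PU unfolding P_def by simp_all
  have Uexp: "\<forall>w\<in>topspace X. \<forall>w'\<in>topspace X.
           (\<forall>n. \<exists>U\<in>\<U>. (T ^^ n) w \<in> U \<and> (T ^^ n) w' \<in> U) \<longrightarrow> w = w'"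
    using PU unfolding P_def by (elim conjE)
  let ?V = "{V. openin Yh V \<and> inj_on piY V}"
  have cY: "compactin Yh (topspace Yh)" using assms(4) unfolding compact_space_def .
  have covV: "topspace Yh \<subseteq> \<Union>?V"
  proof
    fix y assume "y \<in> topspace Yh"
    then obtain V where "openin Yh V" "y \<in> V" "inj_on piY V"
      using assms(16) unfolding locally_injective_def by blast
    then show "y \<in> \<Union>?V" by blast
  qed
  have cmp: "\<forall>\<U>. (\<forall>U\<in>\<U>. openin Yh U) \<and> topspace Yh \<subseteq> \<Union>\<U> \<longrightarrow>
      (\<exists>F. finite F \<and> F \<subseteq> \<U> \<and> topspace Yh \<subseteq> \<Union>F)"
    using cY unfolding compactin_def by (rule conjunct2)
  have "\<exists>F. finite F \<and> F \<subseteq> ?V \<and> topspace Yh \<subseteq> \<Union>F"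
    using cmp[rule_format, of ?V] covV by simp
  then obtain F where F: "finite F" "F \<subseteq> ?V" "topspace Yh \<subseteq> \<Union>F"
    by blast
  have traj: "piY (p n) = (T ^^ n) (piY (p 0))" if "p \<in> ?L" for p n
  proof (induction n)
    case (Suc n)
    have "piY (p (Suc n)) = piX (s (p (Suc n)))" using assms(15) lp_top[OF that] by blast
    also have "\<dots> = piX (r (p n))" using that by (simp add: left_paths_def)
    also have "\<dots> = T (piY (p n))" using assms(14) lp_top[OF that] by metis
    finally show ?case using Suc by simp
  qed simp
  define W where "W = (\<lambda>(U,V). {p \<in> ?L. p 0 \<in> V \<and> piY (p 0) \<in> U}) ` (\<U> \<times> F)"
  have cont: "continuous_map (left_path_space Yh r s) (left_path_space Yh r s) path_shift"
  proof -
    have "continuous_map ?P ?P path_shift"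
      unfolding path_shift_def continuous_map_componentwise_UNIV
    proof (intro allI)
      fix k
      show "continuous_map ?P Yh (\<lambda>x. x (Suc k))"
        using continuous_map_product_projection[of "Suc k" UNIV "\<lambda>_. Yh"] by simp
    qed
    then have c1: "continuous_map (subtopology ?P ?L) ?P path_shift"
      by (rule continuous_map_from_subtopology)
    have c2: "path_shift \<in> topspace (subtopology ?P ?L) \<rightarrow> ?L"
      by (auto simp: left_paths_def path_shift_def)
    show ?thesis unfolding left_path_space_def
      using continuous_map_into_subtopology[OF c1 c2] .
  qed
  have opW: "\<forall>A\<in>W. openin (left_path_space Yh r s) A"
  proof
    fix A assume "A \<in> W"
    then obtain UV where UV0: "UV \<in> \<U> \<times> F"
      and A0: "A = (\<lambda>(U,V). {p \<in> ?L. p 0 \<in> V \<and> piY (p 0) \<in> U}) UV"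
      unfolding W_def by (rule imageE)
    obtain U V where UVeq: "UV = (U, V)" by (cases UV)
    have UV: "U \<in> \<U>" "V \<in> F" using UV0 UVeq by simp_all
    have A: "A = {p \<in> ?L. p 0 \<in> V \<and> piY (p 0) \<in> U}" using A0 UVeq by simp
    have c0: "continuous_map ?P Yh (\<lambda>p. p 0)"
        using continuous_map_product_projection[of 0 UNIV "\<lambda>_. Yh"] by simp
    have o1: "openin ?P {p \<in> topspace ?P. p 0 \<in> V}"
      using openin_continuous_map_preimage[OF c0] UV F(2) by auto
    have o2: "openin ?P {p \<in> topspace ?P. piY (p 0) \<in> U}"
      using openin_continuous_map_preimage[OF continuous_map_compose[OF c0 assms(10)], of U]
        UV U(2) by (simp add: o_def)
    have "openin ?P ({p \<in> topspace ?P. p 0 \<in> V} \<inter> {p \<in> topspace ?P. piY (p 0) \<in> U})"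
      by (rule openin_Int[OF o1 o2])
    moreover have "A = ?L \<inter> ({p \<in> topspace ?P. p 0 \<in> V} \<inter> {p \<in> topspace ?P. piY (p 0) \<in> U})"
      using A by (auto simp: left_paths_def)
    ultimately show "openin (left_path_space Yh r s) A"
      unfolding left_path_space_def by (simp add: openin_subtopology_Int2)
  qed
  have unW: "\<Union>W = topspace (left_path_space Yh r s)"
  proof
    show "\<Union>W \<subseteq> topspace (left_path_space Yh r s)" unfolding tsL W_def by auto
    show "topspace (left_path_space Yh r s) \<subseteq> \<Union>W"
    proof
      fix p assume "p \<in> topspace (left_path_space Yh r s)"
      hence p: "p \<in> ?L" using tsL by simp
      hence p0: "p 0 \<in> topspace Yh" by (rule lp_top)
      then obtain V where "V \<in> F" "p 0 \<in> V" using F(3) by blast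
      moreover have "piY (p 0) \<in> topspace X" using p0 assms(11) by blast
      then obtain U where "U \<in> \<U>" "piY (p 0) \<in> U" using U(3) by blast
      ultimately show "p \<in> \<Union>W" unfolding W_def using p by blast
    qed
  qed
  have exp: "\<forall>w\<in>topspace (left_path_space Yh r s). \<forall>w'\<in>topspace (left_path_space Yh r s).
           (\<forall>n. \<exists>A\<in>W. (path_shift ^^ n) w \<in> A \<and> (path_shift ^^ n) w' \<in> A) \<longrightarrow> w = w'"
  proof (intro ballI impI)
    fix p q assume p: "p \<in> topspace (left_path_space Yh r s)" and q: "q \<in> topspace (left_path_space Yh r s)"
      and H: "\<forall>n. \<exists>A\<in>W. (path_shift ^^ n) p \<in> A \<and> (path_shift ^^ n) q \<in> A"
    have pL: "p \<in> ?L" and qL: "q \<in> ?L" using p q tsL by auto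
    have H2: "\<exists>U\<in>\<U>. \<exists>V\<in>F. p n \<in> V \<and> q n \<in> V \<and> piY (p n) \<in> U \<and> piY (q n) \<in> U" for n
    proof -
      obtain A where "A \<in> W" "(path_shift ^^ n) p \<in> A" "(path_shift ^^ n) q \<in> A"
        using H by blast
      then obtain U V where "U \<in> \<U>" "V \<in> F" "A = {p \<in> ?L. p 0 \<in> V \<and> piY (p 0) \<in> U}"
        unfolding W_def by auto
      then show ?thesis using \<open>(path_shift ^^ n) p \<in> A\<close> \<open>(path_shift ^^ n) q \<in> A\<close>
        unfolding shift_pow by auto
    qed
    have "piY (p 0) = piY (q 0)"
    proof (rule Uexp[rule_format])
      show "piY (p 0) \<in> topspace X" "piY (q 0) \<in> topspace X"
        using lp_top[OF pL] lp_top[OF qL] assms(11) by blast+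
      show "\<exists>U\<in>\<U>. (T ^^ n) (piY (p 0)) \<in> U \<and> (T ^^ n) (piY (q 0)) \<in> U" for n
      proof -
        obtain U where "U \<in> \<U>" "piY (p n) \<in> U" "piY (q n) \<in> U" using H2[of n] by blast
        thus ?thesis unfolding traj[OF pL, of n] traj[OF qL, of n] by blast
      qed
    qed
    hence eqn: "piY (p n) = piY (q n)" for n unfolding traj[OF pL, of n] traj[OF qL, of n] by simp
    have "p n = q n" for n
    proof -
      obtain V where "V \<in> F" "p n \<in> V" "q n \<in> V" using H2[of n] by blast
      thus ?thesis using F(2) eqn[of n] by (auto simp: inj_on_def)
    qed
    thus "p = q" by auto
  qed
  show ?thesis unfolding positively_expansive_def
    apply (intro conjI cont exI[of _ W])
    using U(1) F(1) W_def opW unW exp by auto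
qed

end
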